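(* Let $u,v$ be generalized Stirling permutations and $F_u^*,F_v^*$ the corresponding dual basis elements of the graded dual $\mathrm{STSym}^*$ (whose product is the transpose of the coproduct of $\mathrm{STSym}$). Then $$F_u^*\cdot F_v^*=\sum_{w:\ u\backslash v\ \le_{Pw}\ w\ \le_{Pw}\ u/v}F_w^*.$$
   Context: A generalized Stirling permutation (GSP) of degree $n$ is a planar tree (children of each node linearly ordered, each node a leaf or with $\ge2$ children) with $n+1$ leaves, together with a bijection $\kappa$ from its internal nodes to $\{1,\dots,N\}$ ($N$ = number of internal nodes) increasing from each internal node to its internal children. Its word $\mathbf w(u)=u_1\cdots u_n$: a leaf has empty word; a node $x$ with children $c_1,\dots,c_k$ has word $\mathbf w(c_1)\kappa(x)\mathbf w(c_2)\cdots\kappa(x)\mathbf w(c_k)$; $u\mapsto \mathbf w(u)$ is injective and we identify $u$ with its word, a packed word (set of letters $\{1,\dots,N\}$). For a word $a$, $\mathrm{pack}(a)$ is the packed word with the same relative order of letters. $\mathrm{STSym}$ has basis $\{F_u\}$ over GSPs, with coproduct $\Delta(F_w)=\sum F_{\mathrm{pack}(w_1\cdots w_i)}\otimes F_{\mathrm{pack}(w_{i+1}\cdots w_n)}$ over all $0\le i\le n$ with $\{w_1,\dots,w_i\}\cap\{w_{i+1},\dots,w_n\}=\emptyset$ (equivalently, over allowable lightning splittings of the tree, with standardized labels). $u/v$ is the GSP whose word is $u$ with all letters increased by $\max v$, followed by $v$ (tree: root of $u$ identified with the leftmost leaf of $v$); $u\backslash v$ is the GSP with word $u$ followed by $v$ with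 all letters increased by $\max u$ (tree: root of $v$ identified with the rightmost leaf of $u$). Planar weak order: for packed words, $w^{-1}(a)=\{p:w_p=a\}$, $\mathrm{iInv}(w)=\{(a,b):a<b,\ \min w^{-1}(a)>\max w^{-1}(b)\}$, $T_a(w)$ = $w$ with letters $a,a+1$ swapped; $\le_{Pw}$ is the reflexive–transitive closure of: $u$ is covered by $w$ iff $u=T_a(w)$ and $|\mathrm{iInv}(w)|=|\mathrm{iInv}(u)|+1$; on GSPs it is induced via words. *)

theory Defs
  imports Main "HOL-Library.Multiset"
begin

datatype ptree = Leaf | Node nat "ptree list"

fun labels :: "ptree \<Rightarrow> nat list" where
  "labels Leaf = []"
| "labels (Node a cs) = a # concat (map labels cs)"

fun leaves :: "ptree \<Rightarrow> nat" where
  "leaves Leaf = 1"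
| "leaves (Node a cs) = sum_list (map leaves cs)"

fun wf_inc :: "ptree \<Rightarrow> bool" where
  "wf_inc Leaf = True"
| "wf_inc (Node a cs) = (2 \<le> length cs \<and>
      (\<forall>c\<in>set cs. wf_inc c \<and> (case c of Leaf \<Rightarrow> True | Node b _ \<Rightarrow> a < b)))"

definition valid_tree :: "ptree \<Rightarrow> bool" where
  "valid_tree t \<longleftrightarrow> wf_inc t \<and> distinct (labels t) \<and> set (labels t) = {1..length (labels t)}"

fun word :: "ptree \<Rightarrow> nat list" where
  "word Leaf = []"
| "word (Node a []) = []"
| "word (Node a (c # cs)) = word c @ concat (map (\<lambda>d. a # word d) cs)"

(* generalized Stirling permutations, identified with their words (degree n = length) *)
definition is_GSP :: "nat list \<Rightarrow> bool" where
  "is_GSP w \<longleftrightarrow> (\<exists>t. valid_tree t \<and> word t = w)"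

definition pack :: "nat list \<Rightarrow> nat list" where
  "pack a = map (\<lambda>x. card {y \<in> set a. y \<le> x}) a"

definition maxl :: "nat list \<Rightarrow> nat" where
  "maxl w = Max (insert 0 (set w))"

definition over :: "nat list \<Rightarrow> nat list \<Rightarrow> nat list" where
  "over u v = map (\<lambda>x. x + maxl v) u @ v"

definition under :: "nat list \<Rightarrow> nat list \<Rightarrow> nat list" where
  "under u v = u @ map (\<lambda>x. x + maxl u) v"

(* terms F_pack(w1..wi) (x) F_pack(w_{i+1}..w_n) of Delta(F_w), as a list *)
definition coprod :: "nat list \<Rightarrow> (nat list \<times> nat list) list" where
  "coprod w = [(pack (take i w), pack (drop i w)).
                 i \<leftarrow> [0..<Suc (length w)], set (take i w) \<inter> set (drop i w) = {}]"

(* F_u^* . F_v^* as coefficient function on the basis {F_w^*}, w GSP: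
   coefficient of F_w^* is the coefficient of F_u (x) F_v in Delta(F_w) *)
definition dual_prod :: "nat list \<Rightarrow> nat list \<Rightarrow> nat list \<Rightarrow> nat" where
  "dual_prod u v w = (if is_GSP w then count (mset (coprod w)) (u, v) else 0)"

definition iInv :: "nat list \<Rightarrow> (nat \<times> nat) set" where
  "iInv w = {(a, b). a < b \<and> a \<in> set w \<and> b \<in> set w \<and>
     Min {p. p < length w \<and> w ! p = a} > Max {p. p < length w \<and> w ! p = b}}"

definition T :: "nat \<Rightarrow> nat list \<Rightarrow> nat list" where
  "T a w = map (\<lambda>x. if x = a then Suc a else if x = Suc a then a else x) w"

definition pw_cover :: "nat list \<Rightarrow> nat list \<Rightarrow> bool" where
  "pw_cover u w \<longleftrightarrow> (\<exists>a. a \<in> set w \<and> Suc a \<in> set w \<and> u = T a w \<and>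
      card (iInv w) = card (iInv u) + 1)"

definition pw_le :: "nat list \<Rightarrow> nat list \<Rightarrow> bool" where
  "pw_le = pw_cover\<^sup>*\<^sup>*"

end

theory Submission
  imports Defs
begin

definition sw :: "nat \<Rightarrow> nat \<Rightarrow> nat" where
  "sw a x = (if x = a then Suc a else if x = Suc a then a else x)"

lemma T_sw: "T a w = map (sw a) w" by (simp add: T_def sw_def)
lemma sw_sw[simp]: "sw a (sw a x) = x" by (simp add: sw_def)
lemma sw_inj_eq[simp]: "sw a x = sw a y \<longleftrightarrow> x = y" by (metis sw_sw)
lemma inj_sw: "inj (sw a)" by (simp add: inj_def)
lemma sw_less: "x < y \<Longrightarrow> (x,y) \<noteq> (a,Suc a) \<Longrightarrow> sw a x < sw a y" by (auto simp: sw_def)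
lemma TT[simp]: "T a (T a w) = w" by (simp add: T_sw comp_def)

lemma iInv_finite: "finite (iInv w)"
  by (rule finite_subset[of _ "set w \<times> set w"]) (auto simp: iInv_def)

lemma iInv_sw_sub:
  assumes "(x,y) \<in> iInv w" "(x,y) \<noteq> (a,Suc a)"
  shows "(sw a x, sw a y) \<in> iInv (T a w)"
proof -
  have pos: "\<And>z. {p. p < length (T a w) \<and> T a w ! p = sw a z} = {p. p < length w \<and> w ! p = z}"
    by (auto simp: T_sw)
  have "x < y" using assms(1) by (auto simp: iInv_def)
  hence "sw a x < sw a y" using assms(2) sw_less by blast
  moreover have "sw a x \<in> set (T a w)" "sw a y \<in> set (T a w)" using assms(1) by (auto simp: iInv_def T_sw)
  moreover have "Max {p. p < length (T a w) \<and> T a w ! p = sw a y}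
        < Min {p. p < length (T a w) \<and> T a w ! p = sw a x}"
    using assms(1) unfolding pos[of x] pos[of y] by (auto simp: iInv_def)
  ultimately show ?thesis unfolding iInv_def by blast
qed

lemma iInv_sw_card: "card (iInv w - {(a,Suc a)}) = card (iInv (T a w) - {(a,Suc a)})"
proof -
  define \<phi> where "\<phi> = (\<lambda>(x,y). (sw a x, sw a y))"
  have inj: "inj \<phi>" by (auto simp: \<phi>_def inj_def)
  have sub: "\<phi> ` (iInv w' - {(a,Suc a)}) \<subseteq> iInv (T a w') - {(a,Suc a)}" for w'
  proof
    fix z assume "z \<in> \<phi> ` (iInv w' - {(a,Suc a)})"
    then obtain x y where z: "z = (sw a x, sw a y)" "(x,y) \<in> iInv w'" "(x,y) \<noteq> (a,Suc a)"
      by (auto simp: \<phi>_def)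
    have "x < y" using z(2) by (auto simp: iInv_def)
    hence "z \<noteq> (a, Suc a)" using z(1) by (auto simp: sw_def split: if_splits)
    thus "z \<in> iInv (T a w') - {(a,Suc a)}" using iInv_sw_sub z by auto
  qed
  have "card (iInv w - {(a,Suc a)}) \<le> card (iInv (T a w) - {(a,Suc a)})"
    by (rule card_inj_on_le[OF inj_on_subset[OF inj] sub]) (auto simp: iInv_finite)
  moreover have "card (iInv (T a w) - {(a,Suc a)}) \<le> card (iInv (T a (T a w)) - {(a,Suc a)})"
    by (rule card_inj_on_le[OF inj_on_subset[OF inj] sub]) (auto simp: iInv_finite)
  ultimately show ?thesis by simp
qed

lemma iInv_notin:
  assumes "p < q" "q < length w" "w!p = a" "w!q = b"
  shows "(a,b) \<notin> iInv w"
proof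
  assume "(a,b) \<in> iInv w"
  hence m: "Min {p. p < length w \<and> w ! p = a} > Max {p. p < length w \<and> w ! p = b}"
    by (auto simp: iInv_def)
  have f: "finite {p. p < length w \<and> w ! p = c}" for c by auto
  have "Min {p. p < length w \<and> w ! p = a} \<le> p" using assms by (intro Min_le[OF f]) auto
  moreover have "q \<le> Max {p. p < length w \<and> w ! p = b}" using assms by (intro Max_ge[OF f]) auto
  ultimately show False using m assms(1) by linarith
qed

lemma iInv_in:
  assumes "a < b" "a \<in> set w" "b \<in> set w"
    "\<And>p q. p < length w \<Longrightarrow> q < length w \<Longrightarrow> w!p = b \<Longrightarrow> w!q = a \<Longrightarrow> p < q"
  shows "(a,b) \<in> iInv w"
proof -
  have f: "finite {p. p < length w \<and> w ! p = c}" for c by auto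
  have ne: "{p. p < length w \<and> w ! p = c} \<noteq> {}" if "c \<in> set w" for c
    using that by (auto simp: in_set_conv_nth)
  have 1: "Min {p. p < length w \<and> w ! p = a} \<in> {p. p < length w \<and> w ! p = a}"
    by (rule Min_in[OF f ne[OF assms(2)]])
  have 2: "Max {p. p < length w \<and> w ! p = b} \<in> {p. p < length w \<and> w ! p = b}"
    by (rule Max_in[OF f ne[OF assms(3)]])
  have "Max {p. p < length w \<and> w ! p = b} < Min {p. p < length w \<and> w ! p = a}"
    using 1 2 assms(4) by blast
  thus ?thesis using assms unfolding iInv_def by auto
qed

lemma nth_in_take: "p < length x \<Longrightarrow> p < k \<Longrightarrow> x!p \<in> set (take k x)"
  by (metis in_set_conv_nth length_take min_less_iff_conj nth_take)
lemma nth_in_drop: "p < length x \<Longrightarrow> k \<le> p \<Longrightarrow> x!p \<in> set (drop k x)"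
proof -
  assume a: "p < length x" "k \<le> p"
  hence "drop k x ! (p - k) = x ! p" "p - k < length (drop k x)" by auto
  thus ?thesis by (metis nth_mem)
qed

lemma cover_split:
  assumes "b \<in> set (drop k x)" "Suc b \<in> set (take k x)" "set (take k x) \<inter> set (drop k x) = {}"
  shows "pw_cover (T b x) x"
proof -
  have bx: "b \<in> set x" "Suc b \<in> set x" using assms by (auto dest: in_set_takeD in_set_dropD)
  have "(b, Suc b) \<in> iInv x"
  proof (rule iInv_in[OF _ bx])
    fix p q assume pq: "p < length x" "q < length x" "x!p = Suc b" "x!q = b"
    have "p < k"
    proof (rule ccontr)
      assume "\<not> p < k" hence "Suc b \<in> set (drop k x)" using nth_in_drop pq by fastforce
      thus False using assms by blast
    qed
    moreover have "k \<le> q"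
    proof (rule ccontr)
      assume "\<not> k \<le> q" hence "b \<in> set (take k x)" using nth_in_take pq by fastforce
      thus False using assms by blast
    qed
    ultimately show "p < q" by simp
  qed simp
  moreover have "(b, Suc b) \<notin> iInv (T b x)"
  proof -
    obtain p where p: "p < length (take k x)" "take k x ! p = Suc b" using assms(2) by (auto simp: in_set_conv_nth)
    obtain q where q: "q < length (drop k x)" "drop k x ! q = b" using assms(1) by (auto simp: in_set_conv_nth)
    have "T b x ! p = b" using p by (auto simp: T_sw sw_def)
    moreover have "T b x ! (k+q) = Suc b" using q by (auto simp: T_sw sw_def)
    moreover have "p < k + q" "k + q < length (T b x)" using p q by (auto simp: T_def)
    ultimately show ?thesis using iInv_notin by blast
  qed
  ultimately have "card (iInv x) = card (iInv x - {(b,Suc b)}) + 1"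
    "card (iInv (T b x)) = card (iInv (T b x) - {(b,Suc b)})"
    using card_Diff1_less[OF iInv_finite, of "(b,Suc b)" x] card_Diff_singleton[OF _, of "(b, Suc b)" "iInv x"]
    by auto
  thus ?thesis using iInv_sw_card[of x b] bx unfolding pw_cover_def by auto
qed


lemma length_pack[simp]: "length (pack a) = length a" by (simp add: pack_def)

lemma pack_strict:
  assumes "strict_mono_on S f" "set a \<subseteq> S"
  shows "pack (map f a) = pack a"
proof -
  have "card {y \<in> f ` set a. y \<le> f x} = card {y \<in> set a. y \<le> x}" if "x \<in> set a" for x
  proof -
    have eq: "\<And>y. y \<in> set a \<Longrightarrow> f y \<le> f x \<longleftrightarrow> y \<le> x"
      using assms that strict_mono_on_less_eq[OF assms(1)] by auto
    have "{y \<in> f ` set a. y \<le> f x} = f ` {y \<in> set a. y \<le> x}"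
      using eq by force
    moreover have "inj_on f {y \<in> set a. y \<le> x}"
      using strict_mono_on_imp_inj_on[OF assms(1)] assms(2) by (auto intro: inj_on_subset)
    ultimately show ?thesis by (simp add: card_image)
  qed
  thus ?thesis unfolding pack_def by simp
qed

lemma pack_shift:
  assumes "set y = {Suc m..N}"
  shows "pack y = map (\<lambda>z. z - m) y"
proof -
  have "card {w \<in> set y. w \<le> z} = z - m" if "z \<in> set y" for z
  proof -
    have "{w \<in> set y. w \<le> z} = {Suc m..z}" using assms that by auto
    thus ?thesis by simp
  qed
  thus ?thesis unfolding pack_def by simp
qed

lemma pack_id: "set y = {1..N} \<Longrightarrow> pack y = y"
  using pack_shift[of y 0 N] by simp

lemma card_image_kernel:
  "finite Q \<Longrightarrow> (\<forall>q\<in>Q. \<forall>q'\<in>Q. f q = f q' \<longleftrightarrow> g q = g q') \<Longrightarrow> card (f ` Q) = card (g ` Q)"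
proof (induction Q rule: finite_induct)
  case empty then show ?case by simp
next
  case (insert x Q)
  have "f x \<in> f ` Q \<longleftrightarrow> g x \<in> g ` Q" using insert.prems by auto
  moreover have "card (f ` Q) = card (g ` Q)" using insert by auto
  ultimately show ?case using insert.hyps by (simp add: card_insert_if)
qed

lemma pack_pattern:
  assumes "length a = length b" "\<And>p q. p < length a \<Longrightarrow> q < length a \<Longrightarrow> a!p < a!q \<longleftrightarrow> b!p < b!q"
  shows "pack a = pack b"
proof (rule nth_equalityI)
  show "length (pack a) = length (pack b)" using assms by simp
  fix p assume "p < length (pack a)"
  hence p: "p < length a" by simp
  let ?Q = "{q. q < length a \<and> \<not> a!p < a!q}"
  have ea: "{y \<in> set a. y \<le> a!p} = (\<lambda>q. a!q) ` ?Q"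
    by (auto simp: in_set_conv_nth not_less)
  have QQ: "?Q = {q. q < length b \<and> \<not> b!p < b!q}" using assms p by auto
  have eb: "{y \<in> set b. y \<le> b!p} = (\<lambda>q. b!q) ` ?Q"
    unfolding QQ by (auto simp: in_set_conv_nth not_less)
  have ker: "\<forall>q\<in>?Q. \<forall>q'\<in>?Q. a!q = a!q' \<longleftrightarrow> b!q = b!q'"
    using assms(2) by (metis (no_types, lifting) mem_Collect_eq nat_neq_iff)
  have "card ((\<lambda>q. a!q) ` ?Q) = card ((\<lambda>q. b!q) ` ?Q)"
    by (rule card_image_kernel[OF _ ker]) auto
  thus "pack a ! p = pack b ! p" using p assms(1) ea eb by (simp add: pack_def)
qed

lemma sw_image:
  assumes "1 \<le> b" "Suc b \<le> N"
  shows "sw b ` {1..N} = {1..N}"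
proof
  show "sw b ` {1..N} \<subseteq> {1..N}" using assms by (auto simp: sw_def)
  show "{1..N} \<subseteq> sw b ` {1..N}"
  proof
    fix y assume "y \<in> {1..N}"
    hence "sw b y \<in> {1..N}" using assms by (auto simp: sw_def)
    thus "y \<in> sw b ` {1..N}" by (metis image_eqI sw_sw)
  qed
qed

lemma sw_strict: "\<not> (b \<in> S \<and> Suc b \<in> S) \<Longrightarrow> strict_mono_on S (sw b)"
  by (rule strict_mono_onI) (auto intro!: sw_less)

lemma sum_sw:
  assumes "finite S" "Suc b \<in> S" "b \<notin> S"
  shows "sum id (sw b ` S) < sum id S"
proof -
  have "sum id (sw b ` S) = sum (sw b) S"
    by (simp add: sum.reindex inj_on_def)
  also have "\<dots> = sw b (Suc b) + sum (sw b) (S - {Suc b})"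
    using assms by (simp add: sum.remove)
  also have "sum (sw b) (S - {Suc b}) = sum id (S - {Suc b})"
    using assms by (intro sum.cong) (auto simp: sw_def)
  also have "sum id S = Suc b + sum id (S - {Suc b})"
    using assms by (simp add: sum.remove)
  ultimately show ?thesis by (simp add: sw_def)
qed

lemma adj:
  assumes "A \<union> B = {1..N}" "A \<inter> B = {}" "a \<in> A" "b \<in> B" "b < a"
  shows "\<exists>c. c \<in> B \<and> Suc c \<in> A"
proof -
  let ?S = "{y \<in> B. y < a}"
  have fin: "finite ?S" by (rule finite_subset[of _ "{..<a}"]) auto
  have ne: "?S \<noteq> {}" using assms by auto
  define c where "c = Max ?S"
  have c: "c \<in> B" "c < a" using Max_in[OF fin ne] c_def by auto
  have "Suc c \<in> A"
  proof (cases "Suc c = a")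
    case True thus ?thesis using assms by simp
  next
    case False
    hence lt: "Suc c < a" using c by simp
    have "a \<le> N" using assms by auto
    hence "Suc c \<in> A \<union> B" using assms(1) lt by auto
    moreover have "Suc c \<notin> B"
    proof
      assume "Suc c \<in> B"
      hence "Suc c \<in> ?S" using lt by auto
      hence "Suc c \<le> Max ?S" by (rule Max_ge[OF fin])
      thus False using c_def by simp
    qed
    ultimately show ?thesis by auto
  qed
  thus ?thesis using c by blast
qed

lemma split_interval:
  assumes "A \<union> B = {1..N}" "A \<inter> B = {}" "\<forall>a\<in>A. \<forall>b\<in>B. a < b"
  shows "A = {1..Max (insert 0 A)} \<and> B = {Suc (Max (insert 0 A))..N}"
proof -
  define m where "m = Max (insert 0 A)"
  have finA: "finite A" using assms(1) by (metis finite_Un finite_atLeastAtMost)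
  have mA: "m = 0 \<or> m \<in> A" unfolding m_def using Max_in[of "insert 0 A"] finA by auto
  have le: "a \<le> m" if "a \<in> A" for a unfolding m_def using finA that by auto
  have mN: "m \<le> N" using mA assms(1) by auto
  have "A = {1..m}"
  proof
    show "A \<subseteq> {1..m}" using le assms(1) by auto
    show "{1..m} \<subseteq> A"
    proof
      fix y assume y: "y \<in> {1..m}"
      hence "m \<in> A" using mA by auto
      have "y \<in> A \<union> B" using y mN assms(1) by auto
      moreover have "y \<notin> B" using assms(3) \<open>m \<in> A\<close> y by fastforce
      ultimately show "y \<in> A" by auto
    qed
  qed
  moreover have "B = {1..N} - A" using assms(1,2) by blast
  hence "B = {Suc m..N}" using \<open>A = {1..m}\<close> by auto
  ultimately show ?thesis unfolding m_def by auto
qed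

lemma swap_props:
  assumes "set x = {1..N}" "b \<in> set x" "Suc b \<in> set x"
    "\<not> (b \<in> set (take k x) \<and> Suc b \<in> set (take k x))"
    "\<not> (b \<in> set (drop k x) \<and> Suc b \<in> set (drop k x))"
    "set (take k x) \<inter> set (drop k x) = {}"
  shows "set (T b x) = {1..N}" "length (T b x) = length x"
    "set (take k (T b x)) = sw b ` set (take k x)"
    "set (drop k (T b x)) = sw b ` set (drop k x)"
    "set (take k (T b x)) \<inter> set (drop k (T b x)) = {}"
    "pack (take k (T b x)) = pack (take k x)"
    "pack (drop k (T b x)) = pack (drop k x)"
proof -
  show "set (T b x) = {1..N}" using assms(1-3) sw_image[of b N] by (auto simp: T_sw)
  show "length (T b x) = length x" by (simp add: T_sw)
  show t: "set (take k (T b x)) = sw b ` set (take k x)" by (simp add: T_sw take_map)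
  show d: "set (drop k (T b x)) = sw b ` set (drop k x)" by (simp add: T_sw drop_map)
  show "set (take k (T b x)) \<inter> set (drop k (T b x)) = {}"
    unfolding t d using assms(6) by (simp add: image_Int[OF inj_sw, symmetric])
  show "pack (take k (T b x)) = pack (take k x)"
    unfolding T_sw take_map by (rule pack_strict[OF sw_strict[OF assms(4)]]) simp
  show "pack (drop k (T b x)) = pack (drop k x)"
    unfolding T_sw drop_map by (rule pack_strict[OF sw_strict[OF assms(5)]]) simp
qed


lemma down:
  assumes "set x = {1..N}" "set (take k x) \<inter> set (drop k x) = {}"
  shows "pw_le (under (pack (take k x)) (pack (drop k x))) x"
  using assms
proof (induction "sum id (set (take k x))" arbitrary: x rule: less_induct)
  case less
  have AB: "set (take k x) \<union> set (drop k x) = {1..N}" using less.prems(1)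
    by (metis append_take_drop_id set_append)
  show ?case
  proof (cases "\<exists>b. b \<in> set (drop k x) \<and> Suc b \<in> set (take k x)")
    case True
    then obtain b where b: "b \<in> set (drop k x)" "Suc b \<in> set (take k x)" by blast
    have bx: "b \<in> set x" "Suc b \<in> set x" using b by (auto dest: in_set_takeD in_set_dropD)
    have n1: "\<not> (b \<in> set (take k x) \<and> Suc b \<in> set (take k x))" using b less.prems(2) by blast
    have n2: "\<not> (b \<in> set (drop k x) \<and> Suc b \<in> set (drop k x))" using b less.prems(2) by blast
    note sp = swap_props[OF less.prems(1) bx n1 n2 less.prems(2)]
    have "sum id (set (take k (T b x))) < sum id (set (take k x))"
      unfolding sp(3) using sum_sw[of "set (take k x)" b] b n1 by auto
    hence "pw_le (under (pack (take k (T b x))) (pack (drop k (T b x)))) (T b x)"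
      using less.hyps sp(1) sp(5) by blast
    hence "pw_le (under (pack (take k x)) (pack (drop k x))) (T b x)" using sp by simp
    moreover have "pw_cover (T b x) x" by (rule cover_split[OF b(1) b(2) less.prems(2)])
    ultimately show ?thesis unfolding pw_le_def by (rule rtranclp.rtrancl_into_rtrancl)
  next
    case False
    have lt: "\<forall>a\<in>set (take k x). \<forall>b\<in>set (drop k x). a < b"
    proof (intro ballI)
      fix a b assume ab: "a \<in> set (take k x)" "b \<in> set (drop k x)"
      show "a < b"
      proof (rule ccontr)
        assume "\<not> a < b"
        moreover have "a \<noteq> b" using ab less.prems(2) by blast
        ultimately have "b < a" by simp
        thus False using adj[OF AB less.prems(2) ab] False by blast
      qed
    qed
    define m where "m = Max (insert 0 (set (take k x)))"
    have iv: "set (take k x) = {1..m}" "set (drop k x) = {Suc m..N}"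
      using split_interval[OF AB less.prems(2) lt] m_def by auto
    have p1: "pack (take k x) = take k x" by (rule pack_id[OF iv(1)])
    have p2: "pack (drop k x) = map (\<lambda>z. z - m) (drop k x)" by (rule pack_shift[OF iv(2)])
    have mx: "maxl (take k x) = m" by (simp add: maxl_def m_def)
    have "map (\<lambda>z. z + m) (map (\<lambda>z. z - m) (drop k x)) = drop k x"
      unfolding map_map comp_def by (rule map_idI) (use iv(2) in auto)
    hence "under (pack (take k x)) (pack (drop k x)) = x"
      unfolding under_def p1 p2 mx by simp
    thus ?thesis unfolding pw_le_def by simp
  qed
qed

lemma up:
  assumes "set x = {1..N}" "set (take k x) \<inter> set (drop k x) = {}"
  shows "pw_le x (over (pack (take k x)) (pack (drop k x)))"
  using assms
proof (induction "sum id (set (drop k x))" arbitrary: x rule: less_induct)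
  case less
  have AB: "set (drop k x) \<union> set (take k x) = {1..N}" using less.prems(1)
    by (metis append_take_drop_id set_append Un_commute)
  have dis: "set (drop k x) \<inter> set (take k x) = {}" using less.prems(2) by blast
  show ?case
  proof (cases "\<exists>c. c \<in> set (take k x) \<and> Suc c \<in> set (drop k x)")
    case True
    then obtain c where c: "c \<in> set (take k x)" "Suc c \<in> set (drop k x)" by blast
    have cx: "c \<in> set x" "Suc c \<in> set x" using c by (auto dest: in_set_takeD in_set_dropD)
    have n1: "\<not> (c \<in> set (take k x) \<and> Suc c \<in> set (take k x))" using c less.prems(2) by blast
    have n2: "\<not> (c \<in> set (drop k x) \<and> Suc c \<in> set (drop k x))" using c less.prems(2) by blast
    note sp = swap_props[OF less.prems(1) cx n1 n2 less.prems(2)]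
    have "sum id (set (drop k (T c x))) < sum id (set (drop k x))"
      unfolding sp(4) using sum_sw[of "set (drop k x)" c] c n2 by auto
    hence "pw_le (T c x) (over (pack (take k (T c x))) (pack (drop k (T c x))))"
      using less.hyps sp(1) sp(5) by blast
    hence "pw_le (T c x) (over (pack (take k x)) (pack (drop k x)))" using sp by simp
    moreover have "pw_cover (T c (T c x)) (T c x)"
    proof (rule cover_split[OF _ _ sp(5)])
      show "c \<in> set (drop k (T c x))" unfolding sp(4) using c(2)
        by (metis image_eqI sw_def)
      show "Suc c \<in> set (take k (T c x))" unfolding sp(3) using c(1)
        by (metis image_eqI sw_def)
    qed
    ultimately show ?thesis unfolding pw_le_def
      by (metis TT converse_rtranclp_into_rtranclp)
  next
    case False
    have lt: "\<forall>a\<in>set (drop k x). \<forall>b\<in>set (take k x). a < b"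
    proof (intro ballI)
      fix a b assume ab: "a \<in> set (drop k x)" "b \<in> set (take k x)"
      show "a < b"
      proof (rule ccontr)
        assume "\<not> a < b"
        moreover have "a \<noteq> b" using ab less.prems(2) by blast
        ultimately have "b < a" by simp
        thus False using adj[OF AB dis ab] False by blast
      qed
    qed
    define m where "m = Max (insert 0 (set (drop k x)))"
    have iv: "set (drop k x) = {1..m}" "set (take k x) = {Suc m..N}"
      using split_interval[OF AB dis lt] m_def by auto
    have p1: "pack (drop k x) = drop k x" by (rule pack_id[OF iv(1)])
    have p2: "pack (take k x) = map (\<lambda>z. z - m) (take k x)" by (rule pack_shift[OF iv(2)])
    have mx: "maxl (drop k x) = m" by (simp add: maxl_def m_def)
    have "map (\<lambda>z. z + m) (map (\<lambda>z. z - m) (take k x)) = take k x"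
      unfolding map_map comp_def by (rule map_idI) (use iv(2) in auto)
    hence "over (pack (take k x)) (pack (drop k x)) = x"
      unfolding over_def p1 p2 mx by simp
    thus ?thesis unfolding pw_le_def by simp
  qed
qed


definition rel :: "nat list \<Rightarrow> nat list \<Rightarrow> bool" where
  "rel x y \<longleftrightarrow> length x = length y \<and> (\<forall>p<length x. \<forall>q<length x. x!p = x!q \<longleftrightarrow> y!p = y!q)
     \<and> (\<forall>p q. p < q \<longrightarrow> q < length x \<longrightarrow> x!q < x!p \<longrightarrow> y!q < y!p)"

lemma cover_rel:
  assumes "pw_cover x y" shows "rel x y"
proof -
  obtain a where a: "x = T a y" "card (iInv y) = card (iInv x) + 1"
    using assms by (auto simp: pw_cover_def)
  have inv: "(a, Suc a) \<in> iInv y"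
  proof (rule ccontr)
    assume "(a, Suc a) \<notin> iInv y"
    hence "card (iInv y) = card (iInv y - {(a,Suc a)})" by simp
    also have "\<dots> = card (iInv x - {(a,Suc a)})" using iInv_sw_card[of y a] a(1) by simp
    also have "\<dots> \<le> card (iInv x)" by (rule card_mono[OF iInv_finite]) auto
    finally show False using a(2) by simp
  qed
  have xn: "\<And>p. p < length y \<Longrightarrow> x!p = sw a (y!p)" using a(1) by (simp add: T_sw)
  have len: "length x = length y" using a(1) by (simp add: T_sw)
  have ord: "y!q < y!p" if pq: "p < q" "q < length y" "x!q < x!p" for p q
  proof (rule ccontr)
    assume "\<not> y!q < y!p"
    moreover have "y!q \<noteq> y!p" using pq xn by auto
    ultimately have lt: "y!p < y!q" by simp
    show False
    proof (cases "(y!p, y!q) = (a, Suc a)")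
      case True
      thus False using iInv_notin[OF pq(1) pq(2)] inv by auto
    next
      case False
      thus False using sw_less[OF lt False] pq xn by auto
    qed
  qed
  show ?thesis unfolding rel_def using len xn ord by auto
qed

lemma le_rel: "pw_le x y \<Longrightarrow> rel x y"
  unfolding pw_le_def
proof (induction rule: rtranclp_induct)
  case base thus ?case by (simp add: rel_def)
next
  case (step y z)
  from cover_rel[OF step(2)] step(3) show ?case unfolding rel_def by (metis)
qed

lemma word_labels: "wf_inc t \<Longrightarrow> set (word t) = set (labels t)"
proof (induction t)
  case Leaf thus ?case by simp
next
  case (Node a cs)
  from Node.prems obtain c cs' where cs: "cs = c # cs'" "cs' \<noteq> []"
    by (cases cs; cases "tl cs") auto
  have wf: "\<And>d. d \<in> set cs \<Longrightarrow> wf_inc d" using Node.prems by auto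
  have "set (word (Node a cs)) = set (word c) \<union> (\<Union>d\<in>set cs'. insert a (set (word d)))"
    using cs by simp
  also have "\<dots> = insert a (\<Union>d\<in>set cs. set (word d))" using cs by auto
  also have "\<dots> = insert a (\<Union>d\<in>set cs. set (labels d))" using Node.IH wf by auto
  finally show ?case by simp
qed

lemma maxl_int: "set w = {1..L} \<Longrightarrow> maxl w = L"
proof -
  assume s: "set w = {1..L}"
  have "Max (insert 0 {1..L}) = L" by (rule Max_eqI) auto
  thus ?thesis using s by (simp add: maxl_def)
qed

lemma gsp_set: "is_GSP w \<Longrightarrow> set w = {1..maxl w}"
proof -
  assume "is_GSP w"
  then obtain t where t: "valid_tree t" "word t = w" by (auto simp: is_GSP_def)
  hence "set w = {1..length (labels t)}" using word_labels by (auto simp: valid_tree_def)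
  thus ?thesis using maxl_int by metis
qed

lemma comp_filter: "[f i. i \<leftarrow> xs, P i] = map f (filter P xs)"
  by (induction xs) auto

lemma coprod_count:
  "count (mset (coprod w)) (u,v) = (if length u \<le> length w \<and> set (take (length u) w) \<inter> set (drop (length u) w) = {}
      \<and> u = pack (take (length u) w) \<and> v = pack (drop (length u) w) then 1 else 0)"
proof -
  define Q where "Q i = (set (take i w) \<inter> set (drop i w) = {} \<and> (u,v) = (pack (take i w), pack (drop i w)))" for i
  have "count (mset (coprod w)) (u,v) = length (filter Q [0..<Suc (length w)])"
    unfolding coprod_def comp_filter count_mset count_list_eq_length_filter filter_map filter_filter
    unfolding comp_def length_map by (intro arg_cong[where f=length] filter_cong) (auto simp: Q_def)
  also have "\<dots> = card {i. i < Suc (length w) \<and> Q i}"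
    unfolding length_filter_conv_card length_upt
    by (intro arg_cong[where f=card] Collect_cong) (auto simp del: upt_Suc)
  also have "{i. i < Suc (length w) \<and> Q i} = (if length u \<le> length w \<and> Q (length u) then {length u} else {})"
  proof -
    have key: "i = length u" if "Q i" "i < Suc (length w)" for i
    proof -
      have "u = pack (take i w)" using that(1) unfolding Q_def prod.inject by blast
      thus ?thesis using that(2) by simp
    qed
    show ?thesis
    proof (cases "length u \<le> length w \<and> Q (length u)")
      case True
      have "{i. i < Suc (length w) \<and> Q i} = {length u}"
      proof (rule set_eqI)
        fix i show "i \<in> {i. i < Suc (length w) \<and> Q i} \<longleftrightarrow> i \<in> {length u}"
          using key[of i] True by auto
      qed
      thus ?thesis by (subst if_P[OF True])
    next
      case False
      have "{i. i < Suc (length w) \<and> Q i} = {}"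
      proof (rule set_eqI)
        fix i show "i \<in> {i. i < Suc (length w) \<and> Q i} \<longleftrightarrow> i \<in> {}"
          using key[of i] False by auto
      qed
      thus ?thesis by (subst if_not_P[OF False])
    qed
  qed
  finally have c: "count (mset (coprod w)) (u,v) = card (if length u \<le> length w \<and> Q (length u) then {length u} else {})" .
  have qk: "Q (length u) \<longleftrightarrow> set (take (length u) w) \<inter> set (drop (length u) w) = {}
      \<and> u = pack (take (length u) w) \<and> v = pack (drop (length u) w)"
    unfolding Q_def prod.inject by (rule refl)
  show ?thesis
  proof (cases "length u \<le> length w \<and> Q (length u)")
    case True
    thus ?thesis unfolding c by (subst if_P[OF True], subst if_P) (use True qk in auto)
  next
    case False
    thus ?thesis unfolding c by (subst if_not_P[OF False], subst if_not_P) (use False qk in auto)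
  qed
qed

lemma transfer_ord:
  fixes f g :: "nat \<Rightarrow> nat"
  assumes "f p = f q \<longleftrightarrow> g p = g q"
    "p < q \<Longrightarrow> f q < f p \<Longrightarrow> g q < g p" "q < p \<Longrightarrow> f p < f q \<Longrightarrow> g p < g q"
    "p < q \<Longrightarrow> g q < g p \<Longrightarrow> f q < f p" "q < p \<Longrightarrow> g p < g q \<Longrightarrow> f p < f q"
  shows "g p < g q \<longleftrightarrow> f p < f q"
  using assms by (cases p q rule: linorder_cases) (auto, (metis not_less_iff_gr_or_eq)+)


theorem mainTheorem10:
  assumes "is_GSP u" and "is_GSP v"
  shows "dual_prod u v =
    (\<lambda>w. if is_GSP w \<and> pw_le (under u v) w \<and> pw_le w (over u v) then 1 else 0)"
proof (rule ext)
  fix w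
  show "dual_prod u v w = (if is_GSP w \<and> pw_le (under u v) w \<and> pw_le w (over u v) then 1 else 0)"
  proof (cases "is_GSP w")
    case False thus ?thesis by (simp add: dual_prod_def)
  next
    case True
    define k where "k = length u"
    let ?C = "k \<le> length w \<and> set (take k w) \<inter> set (drop k w) = {} \<and> u = pack (take k w) \<and> v = pack (drop k w)"
    have eqv: "?C \<longleftrightarrow> pw_le (under u v) w \<and> pw_le w (over u v)"
    proof
      assume C: ?C
      have sw: "set w = {1..maxl w}" by (rule gsp_set[OF True])
      have "pw_le (under (pack (take k w)) (pack (drop k w))) w" using down[OF sw] C by blast
      moreover have "pw_le w (over (pack (take k w)) (pack (drop k w)))" using up[OF sw] C by blast
      ultimately show "pw_le (under u v) w \<and> pw_le w (over u v)" using C by simp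
    next
      assume P: "pw_le (under u v) w \<and> pw_le w (over u v)"
      have r1: "rel (under u v) w" and r2: "rel w (over u v)" using P le_rel by auto
      define l where "l = length v"
      define K where "K = maxl u"
      define M where "M = maxl v"
      have su: "set u = {1..K}" using gsp_set[OF assms(1)] K_def by simp
      have sv: "set v = {1..M}" using gsp_set[OF assms(2)] M_def by simp
      have lu: "length (under u v) = k + l" by (simp add: under_def k_def l_def)
      have lo: "length (over u v) = k + l" by (simp add: over_def k_def l_def)
      have lw: "length w = k + l" using r1 lu by (simp add: rel_def)
      have ud1: "\<And>p. p < k \<Longrightarrow> under u v ! p = u!p" by (simp add: under_def nth_append k_def)
      have ud2: "\<And>q. q < l \<Longrightarrow> under u v ! (k+q) = v!q + K" by (simp add: under_def nth_append k_def K_def l_def)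
      have od1: "\<And>p. p < k \<Longrightarrow> over u v ! p = u!p + M" by (simp add: over_def nth_append k_def M_def l_def)
      have od2: "\<And>q. q < l \<Longrightarrow> over u v ! (k+q) = v!q" by (simp add: over_def nth_append k_def l_def)
      have uK: "u!p \<le> K \<and> 1 \<le> u!p" if "p < k" for p
      proof -
        have "u!p \<in> set u" using that k_def by simp
        thus ?thesis using su by auto
      qed
      have v1: "v!q \<le> M \<and> 1 \<le> v!q" if "q < l" for q
      proof -
        have "v!q \<in> set v" using that l_def by simp
        thus ?thesis using sv by auto
      qed
      have R1: "\<And>p q. p < k+l \<Longrightarrow> q < k+l \<Longrightarrow> under u v!p = under u v!q \<longleftrightarrow> w!p = w!q"
        using r1 lu unfolding rel_def by auto
      have R2: "\<And>p q. p < q \<Longrightarrow> q < k+l \<Longrightarrow> under u v!q < under u v!p \<Longrightarrow> w!q < w!p"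
        using r1 lu unfolding rel_def by auto
      have R3: "\<And>p q. p < q \<Longrightarrow> q < k+l \<Longrightarrow> w!q < w!p \<Longrightarrow> over u v!q < over u v!p"
        using r2 lw unfolding rel_def by auto
      have dis: "set (take k w) \<inter> set (drop k w) = {}"
      proof (rule ccontr)
        assume "set (take k w) \<inter> set (drop k w) \<noteq> {}"
        then obtain y where y: "y \<in> set (take k w)" "y \<in> set (drop k w)" by blast
        obtain p where p: "p < length (take k w)" "take k w ! p = y" using y(1) by (auto simp: in_set_conv_nth)
        obtain q where q: "q < length (drop k w)" "drop k w ! q = y" using y(2) by (auto simp: in_set_conv_nth)
        have pk: "p < k" "w!p = y" using p lw by auto
        have ql: "q < l" "w!(k+q) = y" using q lw by auto
        have "under u v!p = under u v!(k+q)" using R1[of p "k+q"] pk ql by simp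
        hence "u!p = v!q + K" using ud1 ud2 pk ql by simp
        thus False using uK[OF pk(1)] v1[OF ql(1)] by simp
      qed
      have pt: "pack (take k w) = u"
      proof -
        have "pack (take k w) = pack u"
        proof (rule pack_pattern)
          show "length (take k w) = length u" using lw k_def by simp
          fix p q assume "p < length (take k w)" "q < length (take k w)"
          hence pq: "p < k" "q < k" using lw by auto
          have "w!p < w!q \<longleftrightarrow> u!p < u!q"
            by (rule transfer_ord[where f="\<lambda>i. u!i" and g="\<lambda>i. w!i"])
              (use R1[of p q] R2[of p q] R2[of q p] R3[of p q] R3[of q p] pq ud1 od1 in auto)
          thus "take k w ! p < take k w ! q \<longleftrightarrow> u!p < u!q" using pq by simp
        qed
        thus ?thesis using pack_id[OF su] by simp
      qed
      have pd: "pack (drop k w) = v"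
      proof -
        have "pack (drop k w) = pack v"
        proof (rule pack_pattern)
          show "length (drop k w) = length v" using lw l_def by simp
          fix p q assume "p < length (drop k w)" "q < length (drop k w)"
          hence pq: "p < l" "q < l" using lw by auto
          have "w!(k+p) < w!(k+q) \<longleftrightarrow> v!p < v!q"
            by (rule transfer_ord[where f="\<lambda>i. v!i" and g="\<lambda>i. w!(k+i)"])
              (use R1[of "k+p" "k+q"] R2[of "k+p" "k+q"] R2[of "k+q" "k+p"] R3[of "k+p" "k+q"]
                   R3[of "k+q" "k+p"] pq ud2 od2 in auto)
          thus "drop k w ! p < drop k w ! q \<longleftrightarrow> v!p < v!q" using pq lw by simp
        qed
        thus ?thesis using pack_id[OF sv] by simp
      qed
      show ?C using dis pt pd lw by simp
    qed
    have "count (mset (coprod w)) (u,v) = (if ?C then 1 else 0)"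
      using coprod_count[of w u v] unfolding k_def .
    also have "\<dots> = (if pw_le (under u v) w \<and> pw_le w (over u v) then 1 else 0)"
      using eqv by simp
    finally show ?thesis unfolding dual_prod_def using True by simp
  qed
qed

end
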